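(* Let $p\in[1,\infty]$ and let the plant, controller operators, concatenated controller and update instants be as described in the context. Let $\bar\gamma>0$ and suppose that all operators $\mathcal{M}^{(i)}$, $i\ge 0$, satisfy $\gamma(\mathcal{M}^{(i)})\le\bar\gamma$. Suppose there exist a non-negative scalar sequence $\mathbf r=\{r^{(i)}\}_{i\ge1}\in\ell_p$ and thresholds $\epsilon^{(i)}>0$, $i\ge1$, such that $$\gamma(\mathcal F)\,\big(\gamma(\mathcal{M}^{(i)})+1\big)\,\epsilon^{(i)}\le r^{(i)}\qquad\forall i\ge1,$$ and suppose that every controller update is performed only when it is admissible, i.e. at every update instant $t_i$, $i\ge1$, $$|x_{t_i}|\le\epsilon^{(i)}.$$ Then for every disturbance sequence $\mathbf w\in\ell_p^n$, the closed-loop trajectories of the plant under the concatenated controller $\tilde{\mathcal M}$ satisfy $\mathbf x\in\ell_p^n$ and $\mathbf u\in\ell_p^m$; i.e. the resulting time-varying closed loop is $\ell_p$-stable.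
   Context: Notation: $\ell^n$ is the set of sequences $\mathbf v=(v_0,v_1,\dots)$ with $v_t\in\mathbb R^n$; $|\cdot|$ is a fixed vector norm; $\|\mathbf v\|_p=(\sum_t|v_t|^p)^{1/p}$ for $p<\infty$ and $\|\mathbf v\|_\infty=\sup_t|v_t|$; $\ell_p^n=\{\mathbf v\in\ell^n:\|\mathbf v\|_p<\infty\}$; $v_{a:b}=(v_a,\dots,v_b)$, and norms of finite segments are defined in the same way. An operator $\mathbf A:\ell^n\to\ell^m$ is causal if $(\mathbf A(\mathbf x))_t$ depends only on $x_{0:t}$. Plant: $x_t=f_{t-1}(x_{t-1},u_{t-1})+w_t$ for $t\ge1$, with $x_t\in\mathbb R^n$, $u_t\in\mathbb R^m$, and the convention $w_0=x_0$. Standing assumption on the plant (input-to-state operator $\mathcal F:(\mathbf u,\mathbf w)\mapsto\mathbf x$ with finite $\ell_p$-gain $\gamma(\mathcal F)$, where an initial state is treated as a disturbance impulse): for every starting time $s\ge0$, every state $x_s$, every $N\ge s$ and all input and disturbance sequences, the trajectory started from $x_s$ at time $s$ satisfies $\|x_{s:N}\|_p\le\gamma(\mathcal F)\,|x_s|+\gamma(\mathcal F)\big(\|u_{s:N}\|_p+\|w_{s:N}\|_p\big)$; in particular (for $s=0$, $x_0=w_0$) $\|x_{0:N}\|_p\le\gamma(\mathcal F)(\|u_{0:N}\|_p+\|w_{0:N}\|_p)$. Controller operators: each $\mathcal M^{(i)}:\ell^n\to\ell^m$, $i\ge0$, is a causal operator (e.g. a time-invariant dynamical system started at zero internal state) with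 finite $\ell_p$-gain $\gamma(\mathcal M^{(i)})>0$, in the sense that for every input sequence $\mathbf z$ and every $N\ge0$, $\|(\mathcal M^{(i)}(\mathbf z))_{0:N}\|_p\le\gamma(\mathcal M^{(i)})\|z_{0:N}\|_p$. Update instants: $t_0=0$, $t_{i+1}=t_i+\mu(x_{t_i})$ for $i\ge0$, where $\mu:\mathbb R^n\to\mathbb N_{\ge1}$ (finitely or infinitely many updates; if finitely many, the last window is infinite). Concatenated controller $\tilde{\mathcal M}$: for $t\in[t_i,t_{i+1})$, $u_t=(\mathcal M^{(i)}(\mathbf z^{(i)}))_{t-t_i}$, where $\mathbf z^{(i)}=(x_{t_i},w_{t_i+1},w_{t_i+2},\dots)$ and $\mathcal M^{(i)}$ is (re)initialized with zero internal state at time $t_i$. (For $i=0$, $\mathbf z^{(0)}=\mathbf w$ since $w_0=x_0$.) *)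

theory Defs
  imports "HOL-Analysis.Analysis" "HOL-Library.Extended_Nat"
begin

definition is_vnorm :: "('a::real_vector \<Rightarrow> real) \<Rightarrow> bool" where
  "is_vnorm N \<longleftrightarrow> (\<forall>x. N x = 0 \<longleftrightarrow> x = 0) \<and> (\<forall>x y. N (x + y) \<le> N x + N y)
      \<and> (\<forall>c x. N (c *\<^sub>R x) = \<bar>c\<bar> * N x)"

definition seg_norm :: "ereal \<Rightarrow> ('a \<Rightarrow> real) \<Rightarrow> (nat \<Rightarrow> 'a) \<Rightarrow> nat \<Rightarrow> nat \<Rightarrow> real" where
  "seg_norm p N v a b =
     (if p = \<infinity> then Max ((\<lambda>t. N (v t)) ` {a..b})
      else (\<Sum>t=a..b. N (v t) powr real_of_ereal p) powr (1 / real_of_ereal p))"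

definition in_lp :: "ereal \<Rightarrow> ('a \<Rightarrow> real) \<Rightarrow> (nat \<Rightarrow> 'a) \<Rightarrow> bool" where
  "in_lp p N v =
     (if p = \<infinity> then (\<exists>B. \<forall>t. N (v t) \<le> B)
      else summable (\<lambda>t. N (v t) powr real_of_ereal p))"

text \<open>Plant trajectory started at time s from state xs: value at time s + k.\<close>
primrec plant_traj :: "(nat \<Rightarrow> 'x \<Rightarrow> 'u \<Rightarrow> 'x::plus) \<Rightarrow> nat \<Rightarrow> 'x \<Rightarrow> (nat \<Rightarrow> 'u) \<Rightarrow> (nat \<Rightarrow> 'x) \<Rightarrow> nat \<Rightarrow> 'x" where
  "plant_traj f s xs u w 0 = xs"
| "plant_traj f s xs u w (Suc k) = f (s + k) (plant_traj f s xs u w k) (u (s + k)) + w (s + k + 1)"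

definition causal :: "((nat \<Rightarrow> 'a) \<Rightarrow> (nat \<Rightarrow> 'b)) \<Rightarrow> bool" where
  "causal A \<longleftrightarrow> (\<forall>z z' t. (\<forall>k\<le>t. z k = z' k) \<longrightarrow> A z t = A z' t)"

end

theory Submission
  imports Defs
begin

lemma powr_le_self_unit: "0 \<le> t \<Longrightarrow> t \<le> 1 \<Longrightarrow> (1::real) \<le> q \<Longrightarrow> t powr q \<le> t"
  by (metis powr_mono' powr_one_gt_zero_iff powr_one le_less powr_zero_eq_one powr_0 order_refl)

lemma superadd_powr:
  fixes a s q :: real assumes "0 \<le> a" "0 \<le> s" "1 \<le> q"
  shows "a powr q + s powr q \<le> (a + s) powr q"
proof (cases "a + s = 0")
  case True hence "a = 0" "s = 0" using assms by auto
  then show ?thesis by simp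
next
  case False
  hence pos: "a + s > 0" using assms by auto
  have "a powr q = (a/(a+s)) powr q * (a+s) powr q"
    using pos assms by (simp add: powr_mult[symmetric])
  also have "\<dots> \<le> (a/(a+s)) * (a+s) powr q"
    using powr_le_self_unit[of "a/(a+s)" q] assms pos by (intro mult_right_mono) auto
  finally have 1: "a powr q \<le> (a/(a+s)) * (a+s) powr q" .
  have "s powr q = (s/(a+s)) powr q * (a+s) powr q"
    using pos assms by (simp add: powr_mult[symmetric])
  also have "\<dots> \<le> (s/(a+s)) * (a+s) powr q"
    using powr_le_self_unit[of "s/(a+s)" q] assms pos by (intro mult_right_mono) auto
  finally have 2: "s powr q \<le> (s/(a+s)) * (a+s) powr q" .
  have "(a/(a+s)) * (a+s) powr q + (s/(a+s)) * (a+s) powr q = (a+s) powr q"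
    using pos by (simp add: add_divide_distrib[symmetric] distrib_right[symmetric])
  with 1 2 show ?thesis by linarith
qed

lemma root_superadd:
  fixes a s q :: real assumes "0 \<le> a" "0 \<le> s" "1 \<le> q"
  shows "(a powr q + s powr q) powr (1/q) \<le> a + s"
proof -
  have "(a powr q + s powr q) powr (1/q) \<le> ((a + s) powr q) powr (1/q)"
    using superadd_powr[OF assms] assms by (intro powr_mono2) auto
  also have "\<dots> = a + s" using assms by (simp add: powr_powr)
  finally show ?thesis .
qed

lemma powr_sum_le2:
  fixes a b q :: real assumes "0 \<le> a" "0 \<le> b" "0 < q"
  shows "(a + b) powr q \<le> 2 powr q * (a powr q + b powr q)"
proof -
  have "(a + b) powr q \<le> (2 * max a b) powr q" using assms by (intro powr_mono2) auto
  also have "\<dots> = 2 powr q * (max a b) powr q" using assms by (simp add: powr_mult)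
  also have "(max a b) powr q \<le> a powr q + b powr q" by (cases "a \<le> b") auto
  hence "2 powr q * (max a b) powr q \<le> 2 powr q * (a powr q + b powr q)" by simp
  finally show ?thesis .
qed

lemma root_le_imp:
  fixes A B c q :: real assumes "0 \<le> A" "0 \<le> B" "0 \<le> c" "0 < q"
    and "A powr (1/q) \<le> c * B powr (1/q)"
  shows "A \<le> c powr q * B"
proof -
  have "A = (A powr (1/q)) powr q" using assms by (simp add: powr_powr)
  also have "\<dots> \<le> (c * B powr (1/q)) powr q" using assms by (intro powr_mono2) auto
  also have "\<dots> = c powr q * B" using assms by (simp add: powr_mult powr_powr)
  finally show ?thesis .
qed

lemma root_le_imp2:
  fixes A b q :: real assumes "0 \<le> A" "0 \<le> b" "0 < q"
    and "A powr (1/q) \<le> b"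
  shows "A \<le> b powr q"
proof -
  have "A = (A powr (1/q)) powr q" using assms by (simp add: powr_powr)
  also have "\<dots> \<le> b powr q" using assms by (intro powr_mono2) auto
  finally show ?thesis .
qed

lemma vnorm_nonneg: "is_vnorm N \<Longrightarrow> 0 \<le> N x"
proof -
  assume n: "is_vnorm N"
  have "N (x + (-1) *\<^sub>R x) \<le> N x + N ((-1) *\<^sub>R x)" using n unfolding is_vnorm_def by blast
  moreover have "N ((-1) *\<^sub>R x) = N x" proof -
    have "N ((-1) *\<^sub>R x) = \<bar>-1\<bar> * N x" using n unfolding is_vnorm_def by blast
    thus ?thesis by simp
  qed
  moreover have "N (x + (-1) *\<^sub>R x) = 0" using n unfolding is_vnorm_def by simp
  ultimately show ?thesis by linarith
qed

lemma seg_shift: "a \<le> b \<Longrightarrow> seg_norm p N v a b = seg_norm p N (\<lambda>j. v (j + a)) 0 (b - a)"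
proof -
  assume ab: "a \<le> b"
  have s: "(\<Sum>t=a..b. g t) = (\<Sum>j=0..b-a. g (j + a))" for g :: "nat \<Rightarrow> real"
    using sum.shift_bounds_cl_nat_ivl[of g 0 a "b-a"] ab by simp
  have i: "(\<lambda>t. N (v t)) ` {a..b} = (\<lambda>j. N (v (j + a))) ` {0..b-a}"
  proof -
    have "{a..b} = (\<lambda>j. j + a) ` {0..b-a}" using ab
      by (auto simp: image_iff intro!: bexI[where x="_ - a"])
    hence "(\<lambda>t. N (v t)) ` {a..b} = (\<lambda>t. N (v t)) ` ((\<lambda>j. j + a) ` {0..b-a})" by simp
    thus ?thesis by (simp only: image_image)
  qed
  show ?thesis unfolding seg_norm_def using s i by simp
qed

lemma seg_cong: "(\<And>t. a \<le> t \<Longrightarrow> t \<le> b \<Longrightarrow> N (v t) = N (v' t)) \<Longrightarrow> seg_norm p N v a b = seg_norm p N v' a b"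
  unfolding seg_norm_def by (auto intro!: sum.cong image_cong)

lemma seg_ge_inf: "a \<le> t \<Longrightarrow> t \<le> b \<Longrightarrow> N (v t) \<le> seg_norm \<infinity> N v a b"
  unfolding seg_norm_def by (auto intro!: Max_ge)

lemma seg_le_inf: "(\<And>t. a \<le> t \<Longrightarrow> t \<le> b \<Longrightarrow> N (v t) \<le> B) \<Longrightarrow> a \<le> b \<Longrightarrow> seg_norm \<infinity> N v a b \<le> B"
  unfolding seg_norm_def by (auto intro!: Max.boundedI)

lemma tt_ge:
  fixes tt :: "nat \<Rightarrow> enat" and \<mu> :: "'a \<Rightarrow> enat"
  assumes "tt 0 = 0" "\<And>i. tt (Suc i) = tt i + \<mu> (g i)" "\<And>\<xi>. \<mu> \<xi> \<ge> 1"
  shows "enat i \<le> tt i"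
proof (induction i)
  case 0 then show ?case using assms by (simp add: zero_enat_def)
next
  case (Suc i)
  have "enat (Suc i) = enat i + 1" by (simp add: eSuc_enat[symmetric] plus_1_eSuc)
  also have "\<dots> \<le> tt i + \<mu> (g i)" using Suc assms(3) by (intro add_mono) auto
  finally show ?case using assms(2) by simp
qed

lemma tt_mono_lt:
  fixes tt :: "nat \<Rightarrow> enat" and \<mu> :: "'a \<Rightarrow> enat"
  assumes "\<And>i. tt (Suc i) = tt i + \<mu> (g i)" "\<And>\<xi>. \<mu> \<xi> \<ge> 1" "tt i = enat k"
  shows "enat k < tt (Suc i)"
proof -
  have e: "tt (Suc i) = enat k + \<mu> (g i)" using assms(1)[of i] assms(3) by simp
  show ?thesis
  proof (cases "\<mu> (g i)")
    case (enat m)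
    with assms(2)[of "g i"] have "m \<ge> 1" by (simp add: one_enat_def)
    thus ?thesis using e enat by simp
  next
    case infinity
    thus ?thesis using e by simp
  qed
qed

lemma window_exists:
  fixes tt :: "nat \<Rightarrow> enat"
  assumes "tt 0 = 0" "\<And>i. enat i \<le> tt i"
  shows "\<exists>i k. tt i = enat k \<and> k \<le> t \<and> enat t < tt (Suc i)"
proof -
  have ex: "\<exists>i. enat t < tt i" using assms(2)[of "Suc t"] 
    by (intro exI[of _ "Suc t"]) (meson enat_ord_simps(2) lessI order_less_le_trans)
  define j where "j = (LEAST i. enat t < tt i)"
  have j: "enat t < tt j" unfolding j_def using ex by (rule LeastI_ex)
  have "j \<noteq> 0" using j assms(1) by (metis enat_0_less_mult_iff mult_zero_left not_less_zero zero_enat_def) 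
  then obtain i where ij: "j = Suc i" by (cases j) auto
  have "\<not> enat t < tt i" using ij not_less_Least[of i "\<lambda>i. enat t < tt i"] unfolding j_def by auto
  hence "tt i \<le> enat t" by simp
  then obtain k where "tt i = enat k" "k \<le> t" by (cases "tt i") auto
  thus ?thesis using j ij by blast
qed

lemma window_sum:
  fixes tt :: "nat \<Rightarrow> enat" and g h c :: "nat \<Rightarrow> real"
  assumes tt0: "tt 0 = 0" and ttge: "\<And>i. enat i \<le> tt i" and c0: "\<And>i. 0 \<le> c i"
    and win: "\<And>i k N. tt i = enat k \<Longrightarrow> k \<le> N \<Longrightarrow> enat N < tt (Suc i) \<Longrightarrow>
        (\<Sum>t=k..N. g t) \<le> c i + (\<Sum>t=k..N. h t)"
  shows "(\<Sum>t\<le>N. g t) \<le> (\<Sum>j\<le>N. c j) + (\<Sum>t\<le>N. h t)"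
proof -
  have P: "\<forall>N. enat N < tt (Suc i) \<longrightarrow> (\<Sum>t\<le>N. g t) \<le> (\<Sum>j\<le>i. c j) + (\<Sum>t\<le>N. h t)" for i
  proof (induction i)
    case 0
    show ?case using win[of 0 0] tt0 by (simp add: atMost_atLeast0 zero_enat_def)
  next
    case (Suc i)
    show ?case
    proof (intro allI impI)
      fix N assume N: "enat N < tt (Suc (Suc i))"
      show "(\<Sum>t\<le>N. g t) \<le> (\<Sum>j\<le>Suc i. c j) + (\<Sum>t\<le>N. h t)"
      proof (cases "enat N < tt (Suc i)")
        case True
        thus ?thesis using Suc.IH c0[of "Suc i"] by fastforce
      next
        case False
        then obtain k where k: "tt (Suc i) = enat k" "k \<le> N" by (cases "tt (Suc i)") auto
        have k1: "1 \<le> k" using ttge[of "Suc i"] k(1) by simp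
        have ih: "(\<Sum>t\<le>k-1. g t) \<le> (\<Sum>j\<le>i. c j) + (\<Sum>t\<le>k-1. h t)"
          using Suc.IH k k1 by auto
        have w: "(\<Sum>t=k..N. g t) \<le> c (Suc i) + (\<Sum>t=k..N. h t)" using win[OF k N] .
        have split: "(\<Sum>t\<le>N. f t) = (\<Sum>t\<le>k-1. f t) + (\<Sum>t=k..N. f t)" for f :: "nat \<Rightarrow> real"
        proof -
          have "{..N} = {..k-1} \<union> {k..N}" using k k1 by auto
          moreover have "{..k-1} \<inter> {k..N} = {}" using k1 by auto
          ultimately show ?thesis by (simp add: sum.union_disjoint)
        qed
        show ?thesis using ih w split[of g] split[of h] by simp
      qed
    qed
  qed
  have "enat N < tt (Suc N)" using ttge[of "Suc N"] by (meson enat_ord_simps(2) lessI order_less_le_trans)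
  thus ?thesis using P by blast
qed

theorem theorem2:
  fixes p :: ereal
    and nx :: "real^'n \<Rightarrow> real" and nu :: "real^'m \<Rightarrow> real"
    and f :: "nat \<Rightarrow> real^'n \<Rightarrow> real^'m \<Rightarrow> real^'n"
    and \<gamma>F :: real
    and M :: "nat \<Rightarrow> (nat \<Rightarrow> real^'n) \<Rightarrow> (nat \<Rightarrow> real^'m)"
    and \<gamma>M :: "nat \<Rightarrow> real" and \<gamma>bar :: real
    and \<mu> :: "real^'n \<Rightarrow> enat"
    and r \<epsilon> :: "nat \<Rightarrow> real"
    and w x :: "nat \<Rightarrow> real^'n" and u :: "nat \<Rightarrow> real^'m"
    and tt :: "nat \<Rightarrow> enat"
  assumes p_ge: "1 \<le> p"
    and nx_norm: "is_vnorm nx" and nu_norm: "is_vnorm nu"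
    \<comment> \<open>standing assumption on the plant: finite l_p gain \<gamma>F, from any starting time\<close>
    and plant_gain: "\<And>s xs N uu ww. s \<le> N \<Longrightarrow>
        seg_norm p nx (plant_traj f s xs uu ww) 0 (N - s)
          \<le> \<gamma>F * nx xs + \<gamma>F * (seg_norm p nu uu s N + seg_norm p nx ww s N)"
    \<comment> \<open>controller operators: causal with finite l_p gain \<gamma>M i > 0\<close>
    and M_causal: "\<And>i. causal (M i)"
    and M_gain: "\<And>i z N. seg_norm p nu (M i z) 0 N \<le> \<gamma>M i * seg_norm p nx z 0 N"
    and \<gamma>M_pos: "\<And>i. \<gamma>M i > 0"
    and \<gamma>bar_pos: "\<gamma>bar > 0"
    and \<gamma>M_le: "\<And>i. \<gamma>M i \<le> \<gamma>bar"
    \<comment> \<open>update-window length function (value \<infinity> allows a final infinite window)\<close>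
    and \<mu>_ge: "\<And>\<xi>. \<mu> \<xi> \<ge> 1"
    \<comment> \<open>the sequence r and the thresholds\<close>
    and r_nonneg: "\<And>i. i \<ge> 1 \<Longrightarrow> r i \<ge> 0"
    and r_lp: "in_lp p abs (\<lambda>i. r (Suc i))"
    and \<epsilon>_pos: "\<And>i. i \<ge> 1 \<Longrightarrow> \<epsilon> i > 0"
    and r_bound: "\<And>i. i \<ge> 1 \<Longrightarrow> \<gamma>F * (\<gamma>M i + 1) * \<epsilon> i \<le> r i"
    \<comment> \<open>disturbance in l_p\<close>
    and w_lp: "in_lp p nx w"
    \<comment> \<open>closed loop: plant dynamics with x_0 = w_0\<close>
    and x0: "x 0 = w 0"
    and x_step: "\<And>t. x (Suc t) = f t (x t) (u t) + w (Suc t)"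
    \<comment> \<open>update instants\<close>
    and tt0: "tt 0 = 0"
    and tt_step: "\<And>i. tt (Suc i) = tt i + \<mu> (x (the_enat (tt i)))"
    \<comment> \<open>concatenated controller, reinitialised at each update instant\<close>
    and u_def: "\<And>i k t. tt i = enat k \<Longrightarrow> k \<le> t \<Longrightarrow> enat t < tt (Suc i) \<Longrightarrow>
        u t = M i (\<lambda>j. if j = 0 then x k else w (k + j)) (t - k)"
    \<comment> \<open>admissibility of every update\<close>
    and admissible: "\<And>i k. i \<ge> 1 \<Longrightarrow> tt i = enat k \<Longrightarrow> nx (x k) \<le> \<epsilon> i"
  shows "in_lp p nx x \<and> in_lp p nu u"
proof -
  have nxn: "\<And>v. 0 \<le> nx v" using vnorm_nonneg[OF nx_norm] .
  have nun: "\<And>v. 0 \<le> nu v" using vnorm_nonneg[OF nu_norm] .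
  have ttge: "\<And>i. enat i \<le> tt i" using tt_ge[of tt \<mu> "\<lambda>i. x (the_enat (tt i))", OF tt0 tt_step \<mu>_ge] .
  have traj: "plant_traj f k (x k) u w j = x (k + j)" for k j
    by (induction j) (simp_all add: x_step)
  define z where "z k = (\<lambda>j. if j = 0 then x k else w (k + j))" for k
  have W1: "seg_norm p nx x k N \<le> \<gamma>F * nx (x k) + \<gamma>F * (seg_norm p nu u k N + seg_norm p nx w k N)"
    if "k \<le> N" for k N
  proof -
    have "seg_norm p nx x k N = seg_norm p nx (\<lambda>j. x (j + k)) 0 (N - k)" using seg_shift that by blast
    also have "\<dots> = seg_norm p nx (plant_traj f k (x k) u w) 0 (N - k)"
      by (rule seg_cong) (simp add: traj add.commute)
    finally show ?thesis using plant_gain[OF that, of "x k" u w] by simp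
  qed
  have W2: "seg_norm p nu u k N \<le> \<gamma>M i * seg_norm p nx (z k) 0 (N - k)"
    if "tt i = enat k" "k \<le> N" "enat N < tt (Suc i)" for i k N
  proof -
    have "seg_norm p nu u k N = seg_norm p nu (\<lambda>j. u (j + k)) 0 (N - k)" using seg_shift that by blast
    also have "\<dots> = seg_norm p nu (M i (z k)) 0 (N - k)"
    proof (rule seg_cong)
      fix j assume j: "0 \<le> j" "j \<le> N - k"
      have "enat (j + k) < tt (Suc i)" 
      proof -
        have "j + k \<le> N" using j that(2) by linarith
        hence "enat (j + k) \<le> enat N" by simp
        thus ?thesis using that(3) by (rule order.strict_trans1)
      qed
      hence "u (j + k) = M i (z k) j" using u_def[OF that(1), of "j + k"] by (simp add: z_def)
      thus "nu (u (j + k)) = nu (M i (z k) j)" by simp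
    qed
    finally show ?thesis using M_gain[of i "z k" "N - k"] by simp
  qed
  show ?thesis
  proof (cases "p = \<infinity>")
    case True
    obtain Bw where Bw: "\<And>t. nx (w t) \<le> Bw" using w_lp True unfolding in_lp_def by auto
    obtain Br where Br: "\<And>i. \<bar>r (Suc i)\<bar> \<le> Br" using r_lp True unfolding in_lp_def by auto
    have Bw0: "0 \<le> Bw" using Bw[of 0] nxn[of "w 0"] by linarith
    have Br0: "0 \<le> Br" using Br[of 0] by linarith
    define Bx where "Bx = Br + 2 * \<bar>\<gamma>F\<bar> * (1 + \<gamma>bar) * Bw"
    have xb: "nx (x t) \<le> Bx" for t
    proof -
      obtain i k where ik: "tt i = enat k" "k \<le> t" "enat t < tt (Suc i)"
        using window_exists[of tt t, OF tt0 ttge] by blast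
      define a where "a = nx (x k)"
      define m where "m = \<gamma>M i"
      define X where "X = seg_norm p nx x k t"
      define U where "U = seg_norm p nu u k t"
      define S where "S = seg_norm p nx w k t"
      define Z where "Z = seg_norm p nx (z k) 0 (t - k)"
      have a0: "0 \<le> a" using nxn a_def by simp
      have sx: "nx (x t) \<le> X" unfolding X_def True using seg_ge_inf ik by blast
      have U0: "0 \<le> U" unfolding U_def True using seg_ge_inf[of k t t nu u] ik nun[of "u t"] by linarith
      have S0: "0 \<le> S" unfolding S_def True using seg_ge_inf[of k t t nx w] ik nxn[of "w t"] by linarith
      have SB: "S \<le> Bw" unfolding S_def True using seg_le_inf[of k t nx w Bw] ik Bw by blast
      have ZB: "Z \<le> max a Bw" unfolding Z_def True
        by (rule seg_le_inf) (auto simp: z_def a_def Bw max.coboundedI2)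
      have w1: "X \<le> \<gamma>F * a + \<gamma>F * (U + S)" using W1[OF ik(2)] unfolding X_def a_def U_def S_def .
      have w2: "U \<le> m * Z" using W2[OF ik] unfolding U_def m_def Z_def .
      have m0: "0 < m" "m \<le> \<gamma>bar" using \<gamma>M_pos \<gamma>M_le m_def by auto
      show ?thesis
      proof (cases "\<gamma>F \<le> 0")
        case True
        have "\<gamma>F * a + \<gamma>F * (U + S) = \<gamma>F * (a + U + S)" by algebra
        also have "\<dots> \<le> 0" using True a0 U0 S0 by (simp add: mult_nonpos_nonneg)
        moreover have "0 \<le> 2 * \<bar>\<gamma>F\<bar> * (1 + \<gamma>bar) * Bw" using Bw0 \<gamma>bar_pos by simp
        ultimately show ?thesis using sx w1 Bx_def Br0 by linarith
      next
        case False
        hence G: "0 < \<gamma>F" by simp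
        have "max a Bw \<le> a + Bw" using a0 Bw0 by simp
        hence "m * Z \<le> m * (a + Bw)" using ZB m0 by (intro mult_left_mono) auto
        hence "U \<le> m * (a + Bw)" using w2 by linarith
        hence "U + S \<le> m * (a + Bw) + Bw" using SB by linarith
        hence "\<gamma>F * (U + S) \<le> \<gamma>F * (m * (a + Bw) + Bw)" using G by (intro mult_left_mono) auto
        hence "X \<le> \<gamma>F * a + \<gamma>F * (m * (a + Bw) + Bw)" using w1 by linarith
        also have "\<dots> = \<gamma>F * (1 + m) * a + \<gamma>F * (1 + m) * Bw" by algebra
        also have "\<gamma>F * (1 + m) * Bw \<le> \<gamma>F * (1 + \<gamma>bar) * Bw" using G m0 Bw0 by (simp add: mult_left_mono mult_right_mono)
        also have "\<gamma>F * (1 + m) * a \<le> Br + \<gamma>F * (1 + \<gamma>bar) * Bw"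
        proof (cases i)
          case 0
          hence "k = 0" using ik tt0 by (simp add: zero_enat_def)
          hence "a \<le> Bw" using a_def x0 Bw by simp
          hence "\<gamma>F * (1 + m) * a \<le> \<gamma>F * (1 + \<gamma>bar) * Bw" using G m0 a0
            by (simp add: mult_mono)
          thus ?thesis using Br0 by linarith
        next
          case (Suc i')
          have "a \<le> \<epsilon> i" using admissible[of i k] ik Suc a_def by simp
          hence "\<gamma>F * (1 + m) * a \<le> \<gamma>F * (1 + m) * \<epsilon> i" using G m0 by simp
          also have "\<dots> \<le> r i" using r_bound[of i] Suc m_def by (simp add: add.commute)
          also have "\<dots> \<le> Br" using Br[of i'] Suc by simp
          moreover have "0 \<le> \<gamma>F * (1 + \<gamma>bar) * Bw" using G Bw0 \<gamma>bar_pos by simp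
          ultimately show ?thesis by linarith
        qed
        finally show ?thesis using sx Bx_def G by (simp add: algebra_simps)
      qed
    qed
    have ub: "nu (u t) \<le> \<gamma>bar * (Bx + Bw)" for t
    proof -
      obtain i k where ik: "tt i = enat k" "k \<le> t" "enat t < tt (Suc i)"
        using window_exists[of tt t, OF tt0 ttge] by blast
      have c1: "nu (u t) \<le> seg_norm p nu u k t" unfolding True using seg_ge_inf ik by blast
      have c2: "seg_norm p nu u k t \<le> \<gamma>M i * seg_norm p nx (z k) 0 (t - k)" using W2[OF ik] .
      have Bx0: "0 \<le> Bx" using xb[of 0] nxn[of "x 0"] by linarith
      have e1: "nx (x k) \<le> Bx + Bw" using xb[of k] Bw0 by linarith
      have e2: "nx (w j) \<le> Bx + Bw" for j using Bw[of j] Bx0 by linarith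
      have zb: "seg_norm p nx (z k) 0 (t - k) \<le> Bx + Bw" unfolding True
        by (rule seg_le_inf) (auto simp: z_def e1 e2)
      have z0: "0 \<le> seg_norm p nx (z k) 0 (t - k)" unfolding True
        using seg_ge_inf[of 0 0 "t - k" nx "z k"] nxn[of "z k 0"] by linarith
      have "\<gamma>M i * seg_norm p nx (z k) 0 (t - k) \<le> \<gamma>bar * (Bx + Bw)"
        using \<gamma>M_pos[of i] \<gamma>M_le[of i] zb z0 \<gamma>bar_pos by (intro mult_mono) auto
      thus ?thesis using c1 c2 by linarith
    qed
    show ?thesis unfolding in_lp_def using True xb ub by auto
  next
    case False
    obtain q where pq: "p = ereal q" using False p_ge by (cases p) auto
    have q1: "1 \<le> q" using p_ge pq by simp
    have q0: "0 < q" using q1 by simp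
    have segf: "seg_norm p N v a b = (\<Sum>t=a..b. N (v t) powr q) powr (1/q)" for N :: "'z \<Rightarrow> real" and v a b
      unfolding seg_norm_def pq by simp
    have lpf: "in_lp p N v = summable (\<lambda>t. N (v t) powr q)" for N :: "'z \<Rightarrow> real" and v
      unfolding in_lp_def pq by simp
    define X where "X t = nx (x t) powr q" for t
    define U where "U t = nu (u t) powr q" for t
    define W where "W t = nx (w t) powr q" for t
    define R where "R i = \<bar>r i\<bar> powr q" for i
    define D where "D = 2 * max \<gamma>F 0 * (\<gamma>bar + 1)"
    have D0: "0 \<le> D" unfolding D_def using \<gamma>bar_pos by simp
    have X0: "\<And>t. 0 \<le> X t" and U0: "\<And>t. 0 \<le> U t" and W0: "\<And>t. 0 \<le> W t" and R0: "\<And>t. 0 \<le> R t"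
      by (simp_all add: X_def U_def W_def R_def)
    have sumW: "summable W" using w_lp unfolding lpf W_def .
    have sumR: "summable R"
    proof -
      have "summable (\<lambda>i. \<bar>r (Suc i)\<bar> powr q)" using r_lp unfolding lpf .
      thus ?thesis unfolding R_def by (subst summable_Suc_iff[symmetric]) simp
    qed
    have Zle: "(\<Sum>j=0..N-k. nx (z k j) powr q) \<le> X k + (\<Sum>t=k..N. W t)" if "k \<le> N" for k N
    proof -
      have "(\<Sum>j=0..N-k. nx (z k j) powr q) \<le> (\<Sum>j=0..N-k. (if j = 0 then X k else 0) + W (j + k))"
        by (rule sum_mono) (auto simp: z_def X_def W_def add.commute)
      also have "\<dots> = X k + (\<Sum>j=0..N-k. W (j + k))" by (simp add: sum.distrib)
      also have "(\<Sum>j=0..N-k. W (j + k)) = (\<Sum>t=k..N. W t)"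
        using sum.shift_bounds_cl_nat_ivl[of W 0 k "N-k"] that by simp
      finally show ?thesis .
    qed
    have winX: "(\<Sum>t=k..N. X t) \<le> 2 powr q * R i + (\<Sum>t=k..N. 2 powr q * D powr q * W t)"
      if ik: "tt i = enat k" "k \<le> N" "enat N < tt (Suc i)" for i k N
    proof -
      define Sx where "Sx = (\<Sum>t=k..N. X t)"
      define Su where "Su = (\<Sum>t=k..N. U t)"
      define Sw where "Sw = (\<Sum>t=k..N. W t)"
      define Zs where "Zs = (\<Sum>j=0..N-k. nx (z k j) powr q)"
      define a where "a = nx (x k)"
      define m where "m = \<gamma>M i"
      define s where "s = Sw powr (1/q)"
      have Sx0: "0 \<le> Sx" unfolding Sx_def by (simp add: X0 sum_nonneg)
      have Su0: "0 \<le> Su" unfolding Su_def by (simp add: U0 sum_nonneg)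
      have Sw0: "0 \<le> Sw" unfolding Sw_def by (simp add: W0 sum_nonneg)
      have Zs0: "0 \<le> Zs" unfolding Zs_def by (simp add: sum_nonneg)
      have a0: "0 \<le> a" unfolding a_def by (rule nxn)
      have s0: "0 \<le> s" unfolding s_def by simp
      have m0: "0 < m" "m \<le> \<gamma>bar" using \<gamma>M_pos \<gamma>M_le m_def by auto
      have w1: "Sx powr (1/q) \<le> \<gamma>F * a + \<gamma>F * (Su powr (1/q) + s)"
        using W1[OF ik(2)] unfolding segf Sx_def Su_def s_def Sw_def a_def X_def U_def W_def .
      have w2: "Su powr (1/q) \<le> m * Zs powr (1/q)"
        using W2[OF ik] unfolding segf Su_def m_def Zs_def U_def .
      have sq: "s powr q = Sw" unfolding s_def using Sw0 q0 by (simp add: powr_powr)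
      have aq: "a powr q = X k" unfolding a_def X_def ..
      have Zr: "Zs powr (1/q) \<le> a + s"
      proof -
        have "Zs \<le> a powr q + s powr q" using Zle[OF ik(2)] unfolding Zs_def sq aq Sw_def .
        hence "Zs powr (1/q) \<le> (a powr q + s powr q) powr (1/q)" using Zs0 q0 by (intro powr_mono2) auto
        also have "\<dots> \<le> a + s" using root_superadd[OF a0 s0 q1] .
        finally show ?thesis .
      qed
      have key: "Sx powr (1/q) \<le> \<bar>r i\<bar> + D * s"
      proof (cases "\<gamma>F \<le> 0")
        case True
        have "\<gamma>F * a + \<gamma>F * (Su powr (1/q) + s) = \<gamma>F * (a + Su powr (1/q) + s)" by algebra
        also have "\<dots> \<le> 0" using True a0 s0 by (simp add: mult_nonpos_nonneg)
        finally show ?thesis using w1 D0 s0 by (smt (verit) abs_ge_zero mult_nonneg_nonneg)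
      next
        case False
        hence G: "0 < \<gamma>F" by simp
        have DG: "D = 2 * \<gamma>F * (\<gamma>bar + 1)" unfolding D_def using G by simp
        have "m * Zs powr (1/q) \<le> m * (a + s)" using Zr m0 by (intro mult_left_mono) auto
        hence "Su powr (1/q) + s \<le> m * (a + s) + s" using w2 by linarith
        hence "\<gamma>F * (Su powr (1/q) + s) \<le> \<gamma>F * (m * (a + s) + s)" using G by (intro mult_left_mono) auto
        hence "Sx powr (1/q) \<le> \<gamma>F * a + \<gamma>F * (m * (a + s) + s)" using w1 by linarith
        also have "\<dots> = \<gamma>F * (1 + m) * a + \<gamma>F * (1 + m) * s" by algebra
        also have "\<gamma>F * (1 + m) * s \<le> \<gamma>F * (1 + \<gamma>bar) * s" using G m0 s0 by (simp add: mult_left_mono mult_right_mono)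
        also have "\<gamma>F * (1 + m) * a \<le> \<bar>r i\<bar> + \<gamma>F * (1 + \<gamma>bar) * s"
        proof (cases i)
          case 0
          hence k0: "k = 0" using ik tt0 by (simp add: zero_enat_def)
          have "X 0 = W 0" unfolding X_def W_def using x0 by simp
          moreover have "W 0 \<le> (\<Sum>t=0..N. W t)" using W0 by (intro member_le_sum) auto
          ultimately have "X k \<le> Sw" unfolding Sw_def k0 by simp
          hence "a powr q \<le> s powr q" using aq sq by simp
          hence "a \<le> s" using a0 s0 q0 powr_less_mono2[of q s a] by linarith
          hence "\<gamma>F * (1 + m) * a \<le> \<gamma>F * (1 + \<gamma>bar) * s" using G m0 a0
            by (intro mult_mono) auto
          thus ?thesis by linarith
        next
          case (Suc i')
          have "a \<le> \<epsilon> i" using admissible[of i k] ik Suc a_def by simp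
          hence "\<gamma>F * (1 + m) * a \<le> \<gamma>F * (1 + m) * \<epsilon> i" using G m0 by simp
          also have "\<dots> \<le> r i" using r_bound[of i] Suc m_def by (simp add: add.commute)
          also have "\<dots> \<le> \<bar>r i\<bar>" by simp
          finally have "\<gamma>F * (1 + m) * a \<le> \<bar>r i\<bar>" .
          moreover have "0 \<le> \<gamma>F * (1 + \<gamma>bar) * s" using G s0 \<gamma>bar_pos by simp
          ultimately show ?thesis by linarith
        qed
        finally show ?thesis unfolding DG by (simp add: algebra_simps)
      qed
      have "Sx \<le> (\<bar>r i\<bar> + D * s) powr q" using root_le_imp2[OF Sx0 _ q0 key] D0 s0 by simp
      also have "\<dots> \<le> 2 powr q * (\<bar>r i\<bar> powr q + (D * s) powr q)"
        using powr_sum_le2[of "\<bar>r i\<bar>" "D * s" q] D0 s0 q0 by simp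
      also have "\<dots> = 2 powr q * R i + 2 powr q * D powr q * Sw"
        using D0 s0 sq by (simp add: R_def powr_mult algebra_simps)
      also have "2 powr q * D powr q * Sw = (\<Sum>t=k..N. 2 powr q * D powr q * W t)"
        unfolding Sw_def by (simp add: sum_distrib_left)
      finally show ?thesis unfolding Sx_def .
    qed
    have winU: "(\<Sum>t=k..N. U t) \<le> 0 + (\<Sum>t=k..N. \<gamma>bar powr q * (X t + W t))"
      if ik: "tt i = enat k" "k \<le> N" "enat N < tt (Suc i)" for i k N
    proof -
      define Su where "Su = (\<Sum>t=k..N. U t)"
      define Zs where "Zs = (\<Sum>j=0..N-k. nx (z k j) powr q)"
      have Su0: "0 \<le> Su" unfolding Su_def by (simp add: U0 sum_nonneg)
      have Zs0: "0 \<le> Zs" unfolding Zs_def by (simp add: sum_nonneg)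
      have w2: "Su powr (1/q) \<le> \<gamma>M i * Zs powr (1/q)"
        using W2[OF ik] unfolding segf Su_def Zs_def U_def .
      have "Su \<le> \<gamma>M i powr q * Zs" using root_le_imp[OF Su0 Zs0 _ q0 w2] \<gamma>M_pos[of i] by simp
      also have "\<dots> \<le> \<gamma>bar powr q * Zs" using \<gamma>M_pos[of i] \<gamma>M_le[of i] Zs0 q0
        by (intro mult_right_mono powr_mono2) auto
      also have "Zs \<le> (\<Sum>t=k..N. X t) + (\<Sum>t=k..N. W t)"
      proof -
        have "X k \<le> (\<Sum>t=k..N. X t)" using ik(2) X0 by (intro member_le_sum) auto
        thus ?thesis using Zle[OF ik(2)] unfolding Zs_def by linarith
      qed
      hence "\<gamma>bar powr q * Zs \<le> \<gamma>bar powr q * ((\<Sum>t=k..N. X t) + (\<Sum>t=k..N. W t))"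
        by (intro mult_left_mono) auto
      also have "\<dots> = (\<Sum>t=k..N. \<gamma>bar powr q * (X t + W t))"
        by (simp add: sum_distrib_left sum.distrib distrib_left)
      finally show ?thesis unfolding Su_def by simp
    qed
    have bx: "(\<Sum>t\<le>N. X t) \<le> 2 powr q * suminf R + 2 powr q * D powr q * suminf W" for N
    proof -
      have "(\<Sum>t\<le>N. X t) \<le> (\<Sum>j\<le>N. 2 powr q * R j) + (\<Sum>t\<le>N. 2 powr q * D powr q * W t)"
        by (rule window_sum[OF tt0 ttge]) (auto simp: R0 intro: winX)
      also have "(\<Sum>j\<le>N. 2 powr q * R j) \<le> 2 powr q * suminf R"
        unfolding sum_distrib_left[symmetric] using sum_le_suminf[OF sumR, of "{..N}"] R0
        by (intro mult_left_mono) auto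
      also have "(\<Sum>t\<le>N. 2 powr q * D powr q * W t) \<le> 2 powr q * D powr q * suminf W"
        unfolding sum_distrib_left[symmetric] using sum_le_suminf[OF sumW, of "{..N}"] W0
        by (intro mult_left_mono) auto
      finally show ?thesis by simp
    qed
    have sumX: "summable X" using bounded_imp_summable[OF X0 bx] .
    have bu: "(\<Sum>t\<le>N. U t) \<le> \<gamma>bar powr q * (suminf X + suminf W)" for N
    proof -
      have "(\<Sum>t\<le>N. U t) \<le> (\<Sum>j\<le>N. (0::real)) + (\<Sum>t\<le>N. \<gamma>bar powr q * (X t + W t))"
        by (rule window_sum[OF tt0 ttge]) (use winU in auto)
      also have "(\<Sum>t\<le>N. \<gamma>bar powr q * (X t + W t)) = \<gamma>bar powr q * ((\<Sum>t\<le>N. X t) + (\<Sum>t\<le>N. W t))"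
        by (simp add: sum_distrib_left sum.distrib distrib_left)
      also have "\<dots> \<le> \<gamma>bar powr q * (suminf X + suminf W)"
        using sum_le_suminf[OF sumX, of "{..N}"] sum_le_suminf[OF sumW, of "{..N}"] X0 W0
        by (intro mult_left_mono add_mono) auto
      finally show ?thesis by simp
    qed
    have sumU: "summable U" using bounded_imp_summable[OF U0 bu] .
    show ?thesis using sumX sumU unfolding lpf X_def U_def by simp
  qed
qed

end
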